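(* Let $\mathrm{2RR}=\textsc{RoundRobin}(\mathrm{ALG}_{\mathrm{fail}},\mathrm{ALG}_{\mathrm{succ}};1,1)$ be run on an SSC instance $I$. Then for every realization $x$ and every $h\in\{\mathrm{fail},\mathrm{succ}\}$, $$\sum_{\tau=1}^{\tau_1}\mathrm{cost}^{\mathrm{2RR}}_\tau(\mathrm{ALG}_h,I)\le 2\,\mathrm{cost}(\mathrm{OPT},I).$$
   Context: An instance $I$ of Stochastic Score Classification (SSC) consists of tests $N=\{1,\dots,n\}$, costs $c_j\ge 0$, success probabilities $p_j\in(0,1)$, and integers $0=t_1<t_2<\dots<t_B<t_{B+1}=n+1$. The outcome vector $x\in\{0,1\}^N$ has independent coordinates with $\Pr[x_j=1]=p_j$ (test $j$ succeeds iff $x_j=1$, otherwise it fails). The score $f(x)$ is the unique $i\in\{1,\dots,B\}$ with $t_i\le\|x\|_1\le t_{i+1}-1$. A (possibly adaptive) strategy conducts tests one at a time, each at most once, the choice of the next test possibly depending on outcomes observed so far, and stops as soon as $f(x)$ is determined (i.e., all $x'\in\{0,1\}^N$ agreeing with $x$ on the conducted tests have $f(x')=f(x)$). $\mathrm{cost}(S,I)$ is the random total cost of the tests conducted by strategy $S$ on $I$. $\mathrm{OPT}$ is a fixed strategy minimizing $\mathbb{E}[\mathrm{cost}(S,I)]$ over all adaptive strategies $S$. Let $\sigma_{\mathrm{fail}},\sigma_{\mathrm{succ}}$ be permutations of $N$ (ties broken arbitrarily) such that $c_{\sigma_{\mathrm{fail}}(1)}/(1-p_{\sigma_{\mathrm{fail}}(1)})\le\dots\le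 c_{\sigma_{\mathrm{fail}}(n)}/(1-p_{\sigma_{\mathrm{fail}}(n)})$ and $c_{\sigma_{\mathrm{succ}}(1)}/p_{\sigma_{\mathrm{succ}}(1)}\le\dots\le c_{\sigma_{\mathrm{succ}}(n)}/p_{\sigma_{\mathrm{succ}}(n)}$; $\mathrm{ALG}_{\mathrm{fail}},\mathrm{ALG}_{\mathrm{succ}}$ denote these orders of tests. $\textsc{RoundRobin}(\mathrm{ALG}_1,\dots,\mathrm{ALG}_k;\alpha_1,\dots,\alpha_k)$, for fixed orders $\mathrm{ALG}_h$ of $N$ and weights $\alpha_h>0$: initialize $C_h=0$ for all $h$; while $f(x)$ is not determined, for each $h$ let $\delta_h$ be the cost of the first test in the order $\mathrm{ALG}_h$ that has not yet been conducted by the scheme, choose $h^\star\in\arg\min_h (C_h+\delta_h)/\alpha_h$ (ties arbitrary), conduct that test of $\mathrm{ALG}_{h^\star}$, and set $C_{h^\star}\leftarrow C_{h^\star}+\delta_{h^\star}$. Each loop iteration is a step; $\mathrm{cost}^{\mathrm{2RR}}_\tau(\mathrm{ALG}_h,I)$ equals the cost of the test conducted in step $\tau$ if $h=h^\star$ in that step, and $0$ otherwise. For a realization $x$ with $i=f(x)$, $\tau_1$ is the smallest integer $\tau\ge 0$ such that among the tests conducted by $\mathrm{2RR}$ in steps $1,\dots,\tau$ at least $t_i$ succeeded or at least $n+1-t_{i+1}$ failed. *)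

theory Defs
  imports Complex_Main
begin

(* Tests are N = {..<n} (0-based).  A realization x is represented by the set
   A \<subseteq> N of succeeding tests (x_j = 1 iff j \<in> A).
   Thresholds t :: nat \<Rightarrow> nat are used at indices 1..B+1. *)

definition score :: "(nat \<Rightarrow> nat) \<Rightarrow> nat \<Rightarrow> nat set \<Rightarrow> nat" where
  "score t B A = (THE i. 1 \<le> i \<and> i \<le> B \<and> t i \<le> card A \<and> card A \<le> t (Suc i) - 1)"

definition determined :: "nat \<Rightarrow> (nat \<Rightarrow> nat) \<Rightarrow> nat \<Rightarrow> nat set \<Rightarrow> nat set \<Rightarrow> bool" where
  "determined n t B S A =
     (\<forall>A'. A' \<subseteq> {..<n} \<longrightarrow> A' \<inter> S = A \<inter> S \<longrightarrow> score t B A' = score t B A)"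

(* adaptive strategy: next test as a function of the observed history *)
type_synonym strategy = "(nat \<times> bool) list \<Rightarrow> nat"

fun srun :: "nat \<Rightarrow> (nat \<Rightarrow> nat) \<Rightarrow> nat \<Rightarrow> strategy \<Rightarrow> nat set \<Rightarrow> nat \<Rightarrow> (nat \<times> bool) list" where
  "srun n t B S A 0 = []"
| "srun n t B S A (Suc k) =
     (let h = srun n t B S A k in
      if determined n t B (fst ` set h) A then h else h @ [(S h, S h \<in> A)])"

definition valid_strategy :: "nat \<Rightarrow> (nat \<Rightarrow> nat) \<Rightarrow> nat \<Rightarrow> strategy \<Rightarrow> bool" where
  "valid_strategy n t B S =
     (\<forall>A k. A \<subseteq> {..<n} \<longrightarrow>
        (let h = srun n t B S A k in
         \<not> determined n t B (fst ` set h) A \<longrightarrow> S h \<in> {..<n} \<and> S h \<notin> fst ` set h))"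

(* cost(S,I) on realization A: the run stops after at most n tests *)
definition strat_cost :: "nat \<Rightarrow> (nat \<Rightarrow> real) \<Rightarrow> (nat \<Rightarrow> nat) \<Rightarrow> nat \<Rightarrow> strategy \<Rightarrow> nat set \<Rightarrow> real" where
  "strat_cost n c t B S A = sum_list (map (\<lambda>(j, _). c j) (srun n t B S A n))"

definition real_prob :: "nat \<Rightarrow> (nat \<Rightarrow> real) \<Rightarrow> nat set \<Rightarrow> real" where
  "real_prob n p A = (\<Prod>j\<in>A. p j) * (\<Prod>j\<in>{..<n} - A. 1 - p j)"

definition exp_cost :: "nat \<Rightarrow> (nat \<Rightarrow> real) \<Rightarrow> (nat \<Rightarrow> real) \<Rightarrow> (nat \<Rightarrow> nat) \<Rightarrow> nat \<Rightarrow> strategy \<Rightarrow> real" where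
  "exp_cost n c p t B S = (\<Sum>A\<in>Pow {..<n}. real_prob n p A * strat_cost n c t B S A)"

definition is_OPT :: "nat \<Rightarrow> (nat \<Rightarrow> real) \<Rightarrow> (nat \<Rightarrow> real) \<Rightarrow> (nat \<Rightarrow> nat) \<Rightarrow> nat \<Rightarrow> strategy \<Rightarrow> bool" where
  "is_OPT n c p t B S =
     (valid_strategy n t B S \<and>
      (\<forall>S'. valid_strategy n t B S' \<longrightarrow> exp_cost n c p t B S \<le> exp_cost n c p t B S'))"

datatype alg = Fail | Succ

(* history of 2RR: list of (index h* of the step, test conducted) *)
definition rr_C :: "(nat \<Rightarrow> real) \<Rightarrow> alg \<Rightarrow> (alg \<times> nat) list \<Rightarrow> real" where
  "rr_C c h hist = sum_list (map (\<lambda>(h', j). if h' = h then c j else 0) hist)"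

definition rr_next :: "(alg \<Rightarrow> nat list) \<Rightarrow> (alg \<times> nat) list \<Rightarrow> alg \<Rightarrow> nat" where
  "rr_next ord hist h = hd (filter (\<lambda>j. j \<notin> snd ` set hist) (ord h))"

(* tb resolves ties (arbitrary tie-breaking, possibly depending on the history) *)
definition rr_choose :: "(nat \<Rightarrow> real) \<Rightarrow> (alg \<Rightarrow> nat list) \<Rightarrow> ((alg \<times> nat) list \<Rightarrow> alg)
    \<Rightarrow> (alg \<times> nat) list \<Rightarrow> alg" where
  "rr_choose c ord tb hist =
     (let vF = (rr_C c Fail hist + c (rr_next ord hist Fail)) / 1;
          vS = (rr_C c Succ hist + c (rr_next ord hist Succ)) / 1
      in if vF < vS then Fail else if vS < vF then Succ else tb hist)"

fun rr_run :: "nat \<Rightarrow> (nat \<Rightarrow> nat) \<Rightarrow> nat \<Rightarrow> (nat \<Rightarrow> real) \<Rightarrow> (alg \<Rightarrow> nat list)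
    \<Rightarrow> ((alg \<times> nat) list \<Rightarrow> alg) \<Rightarrow> nat set \<Rightarrow> nat \<Rightarrow> (alg \<times> nat) list" where
  "rr_run n t B c ord tb A 0 = []"
| "rr_run n t B c ord tb A (Suc k) =
     (let h = rr_run n t B c ord tb A k in
      if determined n t B (snd ` set h) A then h
      else (let a = rr_choose c ord tb h in h @ [(a, rr_next ord h a)]))"

(* cost^{2RR}_tau(ALG_h, I), steps numbered from 1; the run has at most n steps *)
definition rr_step_cost :: "nat \<Rightarrow> (nat \<Rightarrow> nat) \<Rightarrow> nat \<Rightarrow> (nat \<Rightarrow> real) \<Rightarrow> (alg \<Rightarrow> nat list)
    \<Rightarrow> ((alg \<times> nat) list \<Rightarrow> alg) \<Rightarrow> nat set \<Rightarrow> alg \<Rightarrow> nat \<Rightarrow> real" where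
  "rr_step_cost n t B c ord tb A h \<tau> =
     (let run = rr_run n t B c ord tb A n in
      if 1 \<le> \<tau> \<and> \<tau> \<le> length run \<and> fst (run ! (\<tau> - 1)) = h
      then c (snd (run ! (\<tau> - 1))) else 0)"

definition tau1 :: "nat \<Rightarrow> (nat \<Rightarrow> nat) \<Rightarrow> nat \<Rightarrow> (nat \<Rightarrow> real) \<Rightarrow> (alg \<Rightarrow> nat list)
    \<Rightarrow> ((alg \<times> nat) list \<Rightarrow> alg) \<Rightarrow> nat set \<Rightarrow> nat" where
  "tau1 n t B c ord tb A =
     (LEAST \<tau>. let T = snd ` set (take \<tau> (rr_run n t B c ord tb A n)); i = score t B A in
        card (T \<inter> A) \<ge> t i \<or> card (T - A) \<ge> n + 1 - t (Suc i))"

end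

theory Submission
  imports Defs
begin


lemma t_mono_le:
  fixes t :: "nat \<Rightarrow> nat" and i j B :: nat
  assumes t_mono: "\<forall>i. 1 \<le> i \<and> i \<le> B \<longrightarrow> t i < t (i + 1)"
    and "1 \<le> i" "i \<le> j" "j \<le> B + 1"
  shows "t i \<le> (t j::nat)"
proof -
  have "\<forall>j::nat. i \<le> j \<longrightarrow> j \<le> B + 1 \<longrightarrow> t i \<le> t j"
  proof (intro allI impI)
    fix j assume "i \<le> j" "j \<le> B + 1"
    then show "t i \<le> t j"
    proof (induction j rule: dec_induct)
      case base then show ?case by simp
    next
      case (step m)
      then have "t m < t (m + 1)" using t_mono \<open>1 \<le> i\<close> by auto
      then show ?case using step by simp
    qed
  qed
  then show ?thesis using assms by blast
qed

lemma score_props: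
  assumes B: "B \<ge> 1" and t_first: "t 1 = 0" and t_last: "t (B + 1) = n + 1"
    and t_mono: "\<forall>i. 1 \<le> i \<and> i \<le> B \<longrightarrow> t i < t (i + 1)"
    and k: "card A \<le> n"
  shows "1 \<le> score t B A \<and> score t B A \<le> B \<and> t (score t B A) \<le> card A
         \<and> card A \<le> t (Suc (score t B A)) - 1"
proof -
  let ?P = "\<lambda>i. 1 \<le> i \<and> i \<le> B \<and> t i \<le> card A \<and> card A \<le> t (Suc i) - 1"
  define i where "i = Max {i. 1 \<le> i \<and> i \<le> B \<and> t i \<le> card A}"
  have fin: "finite {i. 1 \<le> i \<and> i \<le> B \<and> t i \<le> card A}" by auto
  have ne: "1 \<in> {i. 1 \<le> i \<and> i \<le> B \<and> t i \<le> card A}" using B t_first by auto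
  have iin: "i \<in> {i. 1 \<le> i \<and> i \<le> B \<and> t i \<le> card A}"
    unfolding i_def by (rule Max_in[OF fin]) (use ne in blast)
  have imax: "\<And>j. j \<in> {i. 1 \<le> i \<and> i \<le> B \<and> t i \<le> card A} \<Longrightarrow> j \<le> i"
    unfolding i_def by (rule Max_ge[OF fin])
  have "card A < t (Suc i)"
  proof (cases "i < B")
    case True
    have "\<not> Suc i \<le> i" by simp
    then have "Suc i \<notin> {i. 1 \<le> i \<and> i \<le> B \<and> t i \<le> card A}" using imax by blast
    then show ?thesis using True by simp
  next
    case False
    then have "i = B" using iin by auto
    then show ?thesis using t_last k by simp
  qed
  then have Pi: "?P i" using iin by auto
  have uniq: "\<And>j. ?P j \<Longrightarrow> j = i"
  proof -
    fix j assume Pj: "?P j"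
    have gen: "\<And>a b. ?P a \<Longrightarrow> ?P b \<Longrightarrow> a < b \<Longrightarrow> False"
    proof -
      fix a b assume Pa: "?P a" and Pb: "?P b" and ab: "a < b"
      have "t (Suc a) \<le> t b" using t_mono_le[OF t_mono, of "Suc a" b] Pa Pb ab by auto
      moreover have "t a < t (Suc a)" using t_mono Pa by auto
      ultimately show False using Pa Pb by linarith
    qed
    show "j = i" using gen[OF Pj Pi] gen[OF Pi Pj] by (cases "j < i") (auto simp: not_less_iff_gr_or_eq)
  qed
  have "score t B A = i" unfolding score_def
    using Pi uniq by (rule the_equality)
  then show ?thesis using Pi by simp
qed

lemma det_counts:
  assumes B: "B \<ge> 1" and t_first: "t 1 = 0" and t_last: "t (B + 1) = n + 1"
    and t_mono: "\<forall>i. 1 \<le> i \<and> i \<le> B \<longrightarrow> t i < t (i + 1)"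
    and A: "A \<subseteq> {..<n}" and fS: "finite S"
    and det: "determined n t B S A"
  shows "t (score t B A) \<le> card (S \<inter> A) \<and> n + 1 - t (Suc (score t B A)) \<le> card (S - A)"
proof -
  note sp = score_props[OF B t_first t_last t_mono]
  have cA: "card A \<le> n" using A by (metis card_lessThan card_mono finite_lessThan)
  define A1 where "A1 = A \<inter> S"
  have "A1 \<subseteq> {..<n}" "A1 \<inter> S = A \<inter> S" using A unfolding A1_def by auto
  then have s1: "score t B A1 = score t B A" using det[unfolded determined_def, rule_format, of A1] by simp
  have cA1: "card A1 \<le> n" using \<open>A1 \<subseteq> {..<n}\<close> by (metis card_lessThan card_mono finite_lessThan)
  have c1: "t (score t B A) \<le> card (S \<inter> A)"
    using sp[OF cA1] s1 unfolding A1_def by (simp add: Int_commute)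
  define A2 where "A2 = (A \<inter> S) \<union> ({..<n} - S)"
  have "A2 \<subseteq> {..<n}" "A2 \<inter> S = A \<inter> S" using A unfolding A2_def by auto
  then have s2: "score t B A2 = score t B A" using det[unfolded determined_def, rule_format, of A2] by simp
  have cA2: "card A2 \<le> n" using \<open>A2 \<subseteq> {..<n}\<close> by (metis card_lessThan card_mono finite_lessThan)
  have "card A2 \<le> t (Suc (score t B A)) - 1" using sp[OF cA2] s2 by simp
  moreover have "t (Suc (score t B A)) \<ge> 1"
  proof -
    have "t (score t B A) < t (score t B A + 1)" using t_mono sp[OF cA] by auto
    then show ?thesis by simp
  qed
  moreover have "card A2 + card ((S \<inter> {..<n}) - A) = n"
  proof -
    have d1: "card A2 = card (A \<inter> S) + card ({..<n} - S)" unfolding A2_def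
      by (rule card_Un_disjoint) (use fS in auto)
    have "card ({..<n} - S) + card (S \<inter> {..<n}) = n"
    proof -
      have "card ({..<n} - S) = card {..<n} - card ({..<n} \<inter> S)"
        by (rule card_Diff_subset_Int) simp
      moreover have "card ({..<n} \<inter> S) \<le> n" by (metis card_lessThan card_mono finite_lessThan inf_le1)
      ultimately show ?thesis by (simp add: Int_commute)
    qed
    moreover have "card (S \<inter> {..<n}) = card (A \<inter> S) + card ((S \<inter> {..<n}) - A)"
    proof -
      have "S \<inter> {..<n} = (A \<inter> S) \<union> ((S \<inter> {..<n}) - A)" using A by auto
      moreover have "finite (A \<inter> S)" "finite ((S \<inter> {..<n}) - A)" using fS by auto
      moreover have "(A \<inter> S) \<inter> ((S \<inter> {..<n}) - A) = {}" by auto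
      ultimately show ?thesis using card_Un_disjoint by metis
    qed
    ultimately show ?thesis using d1 by linarith
  qed
  moreover have "card ((S \<inter> {..<n}) - A) \<le> card (S - A)"
    using fS by (intro card_mono) auto
  ultimately have "n + 1 - t (Suc (score t B A)) \<le> card (S - A)" by linarith
  then show ?thesis using c1 by simp
qed



lemma full_det: "A \<subseteq> {..<n} \<Longrightarrow> {..<n} \<subseteq> S \<Longrightarrow> determined n t B S A"
  unfolding determined_def
proof (intro allI impI)
  fix A' assume "A \<subseteq> {..<n}" "{..<n} \<subseteq> S" "A' \<subseteq> {..<n}" "A' \<inter> S = A \<inter> S"
  then have "A' = A" by blast
  then show "score t B A' = score t B A" by simp
qed

lemma rrC_nil[simp]: "rr_C c h [] = 0" by (simp add: rr_C_def)
lemma rrC_snoc[simp]: "rr_C c h (H @ [(a, j)]) = rr_C c h H + (if a = h then c j else 0)"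
  by (simp add: rr_C_def)

lemma hd_sorted_le:
  fixes r :: "nat \<Rightarrow> real"
  assumes "sorted (map r xs)" "x \<in> set xs"
  shows "r (hd xs) \<le> r x"
  using assms by (cases xs) auto

locale rrs =
  fixes n :: nat and t :: "nat \<Rightarrow> nat" and B :: nat and c p :: "nat \<Rightarrow> real"
    and ord :: "alg \<Rightarrow> nat list" and tb :: "(alg \<times> nat) list \<Rightarrow> alg" and A :: "nat set"
  assumes cnn: "\<forall>j<n. c j \<ge> 0"
    and prob: "\<forall>j<n. 0 < p j \<and> p j < 1"
    and ordF: "set (ord Fail) = {..<n}" and ordS: "set (ord Succ) = {..<n}"
    and sortF: "sorted (map (\<lambda>j. c j / (1 - p j)) (ord Fail))"
    and sortS: "sorted (map (\<lambda>j. c j / p j) (ord Succ))"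
    and A: "A \<subseteq> {..<n}"
begin

abbreviation rr where "rr k \<equiv> rr_run n t B c ord tb A k"
abbreviation TT where "TT k \<equiv> snd ` set (rr k)"

lemma ord_all: "set (ord g) = {..<n}"
  using ordF ordS by (cases g) auto

lemma rr_Suc: "rr (Suc k) = (if determined n t B (TT k) A then rr k
   else rr k @ [(rr_choose c ord tb (rr k), rr_next ord (rr k) (rr_choose c ord tb (rr k)))])"
  by (simp add: Let_def)

lemma next_props:
  assumes "\<not> determined n t B (snd ` set H) A"
  shows "rr_next ord H g \<in> {..<n} \<and> rr_next ord H g \<notin> snd ` set H"
proof -
  have "\<not> {..<n} \<subseteq> snd ` set H" using assms full_det[OF A] by blast
  then obtain x where x: "x \<in> {..<n}" "x \<notin> snd ` set H" by blast
  let ?fl = "filter (\<lambda>j. j \<notin> snd ` set H) (ord g)"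
  have "x \<in> set ?fl" using x ord_all by simp
  then have "?fl \<noteq> []" by (metis empty_iff list.set(1))
  then have "hd ?fl \<in> set ?fl" by (rule hd_in_set)
  then show ?thesis using ord_all unfolding rr_next_def by auto
qed

lemma next_le:
  assumes x: "x \<in> {..<n}" "x \<notin> snd ` set H"
  shows "c (rr_next ord H Fail) \<le> c x / (1 - p x)"
    and "c (rr_next ord H Succ) \<le> c x / p x"
proof -
  let ?fl = "\<lambda>g. filter (\<lambda>j. j \<notin> snd ` set H) (ord g)"
  have xin: "x \<in> set (?fl g)" for g using x ord_all by simp
  then have ne: "?fl g \<noteq> []" for g by (metis empty_iff list.set(1))
  have hin: "hd (?fl g) \<in> {..<n}" for g using hd_in_set[OF ne] ord_all by auto
  have r1: "c (hd (?fl Fail)) / (1 - p (hd (?fl Fail))) \<le> c x / (1 - p x)"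
    using hd_sorted_le[of "\<lambda>j. c j / (1 - p j)", OF sorted_filter[OF sortF] xin] .
  have r2: "c (hd (?fl Succ)) / p (hd (?fl Succ)) \<le> c x / p x"
    using hd_sorted_le[of "\<lambda>j. c j / p j", OF sorted_filter[OF sortS] xin] .
  have a1: "c y \<le> c y / (1 - p y)" if "y \<in> {..<n}" for y
  proof -
    have "0 \<le> c y" "0 < p y" "p y < 1" using that cnn prob by auto
    then have "c y * (1 - p y) \<le> c y" by (simp add: mult_left_le)
    then show ?thesis using \<open>p y < 1\<close> by (simp add: le_divide_eq)
  qed
  have a2: "c y \<le> c y / p y" if "y \<in> {..<n}" for y
  proof -
    have "0 \<le> c y" "0 < p y" "p y < 1" using that cnn prob by auto
    then have "c y * p y \<le> c y" by (simp add: mult_left_le)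
    then show ?thesis using \<open>0 < p y\<close> by (simp add: le_divide_eq)
  qed
  show "c (rr_next ord H Fail) \<le> c x / (1 - p x)"
    unfolding rr_next_def using a1[OF hin[of Fail]] r1 by linarith
  show "c (rr_next ord H Succ) \<le> c x / p x"
    unfolding rr_next_def using a2[OF hin[of Succ]] r2 by linarith
qed

lemma min_ratio: "x \<in> {..<n} \<Longrightarrow> min (c x / (1 - p x)) (c x / p x) \<le> 2 * c x"
proof -
  assume x: "x \<in> {..<n}"
  have h: "0 \<le> c x" "0 < p x" "p x < 1" using x cnn prob by auto
  show ?thesis
  proof (cases "p x \<le> 1/2")
    case True
    then have "0 \<le> c x * (1 - 2 * p x)" using h by simp
    then have "c x \<le> 2 * c x * (1 - p x)" by (simp add: algebra_simps)
    then have "c x / (1 - p x) \<le> 2 * c x" using h by (simp add: divide_le_eq)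
    then show ?thesis by linarith
  next
    case False
    then have "0 \<le> c x * (2 * p x - 1)" using h by simp
    then have "c x \<le> 2 * c x * p x" by (simp add: algebra_simps)
    then have "c x / p x \<le> 2 * c x" using h by (simp add: divide_le_eq)
    then show ?thesis by linarith
  qed
qed

definition MM where "MM H = max (rr_C c Fail H) (rr_C c Succ H)"

lemma step_bound:
  assumes x: "x \<in> {..<n}" "x \<notin> snd ` set H"
  defines "a \<equiv> rr_choose c ord tb H"
  shows "MM (H @ [(a, rr_next ord H a)]) \<le> MM H + 2 * c x"
proof -
  define CF where "CF = rr_C c Fail H"
  define CS where "CS = rr_C c Succ H"
  define dF where "dF = c (rr_next ord H Fail)"
  define dS where "dS = c (rr_next ord H Succ)"
  have dFb: "dF \<le> c x / (1 - p x)" and dSb: "dS \<le> c x / p x"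
    using next_le[OF x] unfolding dF_def dS_def by auto
  have mr: "min (c x / (1 - p x)) (c x / p x) \<le> 2 * c x" using min_ratio x by simp
  have cxn: "0 \<le> c x" using x cnn by auto
  have choice: "(a = Fail \<longrightarrow> CF + dF \<le> CS + dS) \<and> (a = Succ \<longrightarrow> CS + dS \<le> CF + dF)"
    unfolding a_def rr_choose_def CF_def CS_def dF_def dS_def Let_def
    by (auto split: if_splits alg.splits)
  show ?thesis
  proof (cases a)
    case Fail
    have "MM (H @ [(a, rr_next ord H a)]) = max (CF + dF) CS"
      unfolding MM_def CF_def CS_def dF_def using Fail by simp
    moreover have "CF + dF \<le> max CF CS + 2 * c x"
      using choice Fail dFb dSb mr by (auto simp: min_def split: if_splits)
    ultimately show ?thesis unfolding MM_def CF_def[symmetric] CS_def[symmetric] using cxn by linarith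
  next
    case Succ
    have "MM (H @ [(a, rr_next ord H a)]) = max CF (CS + dS)"
      unfolding MM_def CF_def CS_def dS_def using Succ by simp
    moreover have "CS + dS \<le> max CF CS + 2 * c x"
      using choice Succ dFb dSb mr by (auto simp: min_def split: if_splits)
    ultimately show ?thesis unfolding MM_def CF_def[symmetric] CS_def[symmetric] using cxn by linarith
  qed
qed

lemma T_inv: "TT k \<subseteq> {..<n} \<and> (determined n t B (TT k) A \<or> card (TT k) = k)"
proof (induction k)
  case 0 then show ?case by simp
next
  case (Suc k)
  show ?case
  proof (cases "determined n t B (TT k) A")
    case True then show ?thesis using Suc rr_Suc[of k] by simp
  next
    case False
    let ?a = "rr_choose c ord tb (rr k)"
    have np: "rr_next ord (rr k) ?a \<in> {..<n} \<and> rr_next ord (rr k) ?a \<notin> TT k"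
      using next_props[OF False] by blast
    have e: "TT (Suc k) = insert (rr_next ord (rr k) ?a) (TT k)"
      using rr_Suc[of k] False by simp
    have "card (TT k) = k" using Suc False by blast
    then have "card (TT (Suc k)) = Suc k" using np e by simp
    then show ?thesis using e np Suc by auto
  qed
qed

lemma det_n: "determined n t B (TT n) A"
proof (rule ccontr)
  assume nd: "\<not> determined n t B (TT n) A"
  then have "card (TT n) = n" "TT n \<subseteq> {..<n}" using T_inv[of n] by auto
  then have "TT n = {..<n}" by (simp add: card_subset_eq)
  then show False using nd full_det[OF A] by auto
qed

lemma det_stable: assumes d: "determined n t B (TT k) A" shows "k \<le> m \<Longrightarrow> rr m = rr k"
proof (induction m rule: dec_induct)
  case base then show ?case by simp
next
  case (step m) then show ?case using rr_Suc[of m] d by simp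
qed

lemma rr_cases: "rr (Suc k) = rr k \<or> (\<not> determined n t B (TT k) A \<and>
   rr (Suc k) = rr k @ [(rr_choose c ord tb (rr k), rr_next ord (rr k) (rr_choose c ord tb (rr k)))])"
  using rr_Suc[of k] by auto

lemma len_le: "length (rr k) \<le> k"
proof (induction k)
  case 0 then show ?case by simp
next
  case (Suc k) then show ?case using rr_cases[of k] by (metis le_SucI length_append_singleton Suc_le_mono)
qed

lemma short_det: "length (rr k) < k \<Longrightarrow> determined n t B (TT k) A"
proof (induction k)
  case 0 then show ?case by simp
next
  case (Suc k)
  show ?case
  proof (cases "determined n t B (TT k) A")
    case True then show ?thesis using rr_Suc[of k] by simp
  next
    case False
    then have "length (rr (Suc k)) = Suc (length (rr k))" using rr_Suc[of k] by simp
    then show ?thesis using Suc False by simp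
  qed
qed

lemma prefix_rr: "k \<le> m \<Longrightarrow> \<exists>ys. rr m = rr k @ ys"
proof (induction m rule: dec_induct)
  case base then show ?case by simp
next
  case (step m)
  then obtain ys where "rr m = rr k @ ys" by blast
  then show ?case using rr_cases[of m] by (metis append.assoc)
qed

lemma take_rr: "k \<le> m \<Longrightarrow> take k (rr m) = rr k"
proof (cases "length (rr k) < k")
  case True
  assume "k \<le> m"
  then have "rr m = rr k" using det_stable short_det[OF True] by blast
  then show ?thesis using True by simp
next
  case False
  assume "k \<le> m"
  then obtain ys where "rr m = rr k @ ys" using prefix_rr by blast
  moreover have "length (rr k) = k" using False len_le[of k] by simp
  ultimately show ?thesis by simp
qed

end


lemma rrC_snoc2: "rr_C c h (H @ [x]) = rr_C c h H + (if fst x = h then c (snd x) else 0)"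
  by (cases x) simp

lemma sum_step: "(\<Sum>\<tau>\<in>{1..m}. rr_step_cost n t B c ord tb A h \<tau>)
    = rr_C c h (take m (rr_run n t B c ord tb A n))"
proof (induction m)
  case 0 then show ?case by simp
next
  case (Suc m)
  define L where "L = rr_run n t B c ord tb A n"
  have "{1..Suc m} = insert (Suc m) {1..m}" by auto
  then have "(\<Sum>\<tau>\<in>{1..Suc m}. rr_step_cost n t B c ord tb A h \<tau>)
     = rr_step_cost n t B c ord tb A h (Suc m) + (\<Sum>\<tau>\<in>{1..m}. rr_step_cost n t B c ord tb A h \<tau>)"
    by simp
  also have "\<dots> = rr_step_cost n t B c ord tb A h (Suc m) + rr_C c h (take m L)"
    using Suc L_def by simp
  also have "\<dots> = rr_C c h (take (Suc m) L)"
  proof (cases "m < length L")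
    case True
    then have "take (Suc m) L = take m L @ [L ! m]" by (simp add: take_Suc_conv_app_nth)
    then show ?thesis using True unfolding rr_step_cost_def L_def[symmetric] Let_def
      by (simp add: rrC_snoc2 add.commute)
  next
    case False
    then show ?thesis unfolding rr_step_cost_def L_def[symmetric] Let_def by simp
  qed
  finally show ?case unfolding L_def .
qed

lemma sl_ge: "(\<forall>j\<in>fst ` set L. 0 \<le> (c::nat \<Rightarrow> real) j) \<Longrightarrow>
   sum c (fst ` set L) \<le> sum_list (map (\<lambda>(j, _). c j) L)"
proof (induction L)
  case Nil then show ?case by simp
next
  case (Cons a L)
  obtain j b where a: "a = (j, b)" by (cases a)
  have "sum c (fst ` set (a # L)) = sum c (insert j (fst ` set L))" using a by simp
  also have "\<dots> \<le> c j + sum c (fst ` set L)"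
    using Cons.prems a by (simp add: sum.insert_if)
  also have "\<dots> \<le> c j + sum_list (map (\<lambda>(j, _). c j) L)" using Cons by simp
  finally show ?case using a by simp
qed

lemma srun_inv:
  assumes v: "valid_strategy n t B S" and A: "A \<subseteq> {..<n}"
  shows "fst ` set (srun n t B S A k) \<subseteq> {..<n} \<and>
     (determined n t B (fst ` set (srun n t B S A k)) A \<or> card (fst ` set (srun n t B S A k)) = k)"
proof (induction k)
  case 0 then show ?case by simp
next
  case (Suc k)
  let ?h = "srun n t B S A k"
  show ?case
  proof (cases "determined n t B (fst ` set ?h) A")
    case True then show ?thesis using Suc by (simp add: Let_def)
  next
    case False
    have np: "S ?h \<in> {..<n} \<and> S ?h \<notin> fst ` set ?h"
      using v False A unfolding valid_strategy_def Let_def by blast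
    have e: "fst ` set (srun n t B S A (Suc k)) = insert (S ?h) (fst ` set ?h)"
      using False by (simp add: Let_def)
    have "card (fst ` set ?h) = k" using Suc False by blast
    then have "card (fst ` set (srun n t B S A (Suc k))) = Suc k" using np e by simp
    then show ?thesis using e np Suc by auto
  qed
qed

lemma srun_det:
  assumes v: "valid_strategy n t B S" and A: "A \<subseteq> {..<n}"
  shows "determined n t B (fst ` set (srun n t B S A n)) A"
proof (rule ccontr)
  let ?T = "fst ` set (srun n t B S A n)"
  assume nd: "\<not> determined n t B ?T A"
  then have "card ?T = n" "?T \<subseteq> {..<n}" using srun_inv[OF v A, of n] by auto
  then have "?T = {..<n}" by (simp add: card_subset_eq)
  then show False using nd full_det[OF A] by auto
qed

context rrs begin

lemma TT_mono: "k \<le> m \<Longrightarrow> TT k \<subseteq> TT m"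
proof -
  assume "k \<le> m"
  then obtain ys where "rr m = rr k @ ys" using prefix_rr by blast
  then show ?thesis by (simp add: image_Un)
qed

lemma inv_main:
  assumes fS: "finite S" and Sn: "S \<subseteq> {..<n}" and cm: "card (TT m) \<le> card S"
  shows "k \<le> m \<Longrightarrow> \<exists>Q \<subseteq> S - TT m. card Q = card (TT k - S) \<and>
            MM (rr k) \<le> 2 * (sum c (S \<inter> TT k) + sum c Q)"
proof (induction k)
  case 0 then show ?case by (intro exI[of _ "{}"]) (simp add: MM_def)
next
  case (Suc k)
  then obtain Q where Q: "Q \<subseteq> S - TT m" "card Q = card (TT k - S)"
     "MM (rr k) \<le> 2 * (sum c (S \<inter> TT k) + sum c Q)" by auto
  have fQ: "finite Q" using Q(1) fS finite_subset by blast
  show ?case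
  proof (cases "rr (Suc k) = rr k")
    case True then show ?thesis using Q by (intro exI[of _ Q]) simp
  next
    case False
    define a where "a = rr_choose c ord tb (rr k)"
    define j where "j = rr_next ord (rr k) a"
    have nd: "\<not> determined n t B (TT k) A" and e: "rr (Suc k) = rr k @ [(a, j)]"
      using rr_cases[of k] False unfolding a_def j_def by auto
    have jp: "j \<in> {..<n}" "j \<notin> TT k" using next_props[OF nd] unfolding j_def by auto
    have TS: "TT (Suc k) = insert j (TT k)" using e by simp
    have sub: "TT (Suc k) \<subseteq> TT m" using TT_mono Suc.prems by blast
    show ?thesis
    proof (cases "j \<in> S")
      case True
      have "MM (rr (Suc k)) \<le> MM (rr k) + 2 * c j"
        using step_bound[OF jp] e unfolding a_def j_def by simp
      moreover have "sum c (S \<inter> TT (Suc k)) = c j + sum c (S \<inter> TT k)"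
      proof -
        have "S \<inter> TT (Suc k) = insert j (S \<inter> TT k)" using TS True by auto
        moreover have "finite (S \<inter> TT k)" using fS by simp
        ultimately show ?thesis using jp(2) by simp
      qed
      moreover have "TT (Suc k) - S = TT k - S" using TS True by auto
      ultimately have "MM (rr (Suc k)) \<le> 2 * (sum c (S \<inter> TT (Suc k)) + sum c Q)"
        and "card Q = card (TT (Suc k) - S)" using Q(2,3) by simp_all
      then show ?thesis using Q(1) by blast
    next
      case False
      have fT: "finite (TT m)" by simp
      have c1: "card (TT (Suc k) - S) = Suc (card (TT k - S))"
      proof -
        have "TT (Suc k) - S = insert j (TT k - S)" using TS False by auto
        moreover have "finite (TT k - S)" by simp
        ultimately show ?thesis using jp(2) by simp
      qed
      have c2: "card (TT (Suc k) - S) \<le> card (TT m - S)"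
        using sub fT by (intro card_mono) auto
      have c3: "card (TT m - S) \<le> card (S - TT m)"
      proof -
        have "card (TT m - S) = card (TT m) - card (TT m \<inter> S)" by (rule card_Diff_subset_Int) (simp add: fT)
        moreover have "card (S - TT m) = card S - card (S \<inter> TT m)" by (rule card_Diff_subset_Int) (simp add: fS)
        moreover have "card (TT m \<inter> S) \<le> card (TT m)" using fT by (simp add: card_mono)
        ultimately show ?thesis using cm by (simp add: Int_commute)
      qed
      have "card Q < card (S - TT m)" using Q(2) c1 c2 c3 by simp
      then have "\<not> (S - TT m) \<subseteq> Q" using fQ card_mono by (metis not_le)
      then obtain x where x: "x \<in> S - TT m" "x \<notin> Q" by blast
      have xn: "x \<in> {..<n}" "x \<notin> TT k" using x Sn TT_mono[OF Suc.prems[THEN Suc_leD]] by auto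
      have "MM (rr (Suc k)) \<le> MM (rr k) + 2 * c x"
        using step_bound[OF xn] e unfolding a_def j_def by simp
      moreover have "S \<inter> TT (Suc k) = S \<inter> TT k" using TS False by auto
      moreover have "sum c (insert x Q) = c x + sum c Q" using fQ x(2) by simp
      moreover have "card (insert x Q) = card (TT (Suc k) - S)" using fQ x(2) c1 Q(2) by simp
      moreover have "insert x Q \<subseteq> S - TT m" using Q(1) x(1) by auto
      ultimately have "MM (rr (Suc k)) \<le> 2 * (sum c (S \<inter> TT (Suc k)) + sum c (insert x Q))"
        and "card (insert x Q) = card (TT (Suc k) - S)" and "insert x Q \<subseteq> S - TT m"
        using Q(3) by simp_all
      then show ?thesis by blast
    qed
  qed
qed

end


theorem lemma5:
  fixes n B :: nat and c p :: "nat \<Rightarrow> real" and t :: "nat \<Rightarrow> nat"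
    and sf ss :: "nat list" and tb :: "(alg \<times> nat) list \<Rightarrow> alg"
    and OPT :: strategy and A :: "nat set" and h :: alg
  assumes cost_nonneg: "\<forall>j<n. c j \<ge> 0"
    and prob: "\<forall>j<n. 0 < p j \<and> p j < 1"
    and B: "B \<ge> 1"
    and t_first: "t 1 = 0" and t_last: "t (B + 1) = n + 1"
    and t_mono: "\<forall>i. 1 \<le> i \<and> i \<le> B \<longrightarrow> t i < t (i + 1)"
    and sf: "distinct sf" "set sf = {..<n}" "sorted (map (\<lambda>j. c j / (1 - p j)) sf)"
    and ss: "distinct ss" "set ss = {..<n}" "sorted (map (\<lambda>j. c j / p j) ss)"
    and opt: "is_OPT n c p t B OPT"
    and A: "A \<subseteq> {..<n}"
  shows "(\<Sum>\<tau>\<in>{1..tau1 n t B c (\<lambda>g. case g of Fail \<Rightarrow> sf | Succ \<Rightarrow> ss) tb A}.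
            rr_step_cost n t B c (\<lambda>g. case g of Fail \<Rightarrow> sf | Succ \<Rightarrow> ss) tb A h \<tau>)
         \<le> 2 * strat_cost n c t B OPT A"
proof -
  define ord where "ord = (\<lambda>g. case g of Fail \<Rightarrow> sf | Succ \<Rightarrow> ss)"
  interpret R: rrs n t B c p ord tb A
    by unfold_locales (use cost_nonneg prob sf ss A in \<open>auto simp: ord_def\<close>)
  define L where "L = rr_run n t B c ord tb A n"
  define i where "i = score t B A"
  define cond where "cond = (\<lambda>\<tau>. let T = snd ` set (take \<tau> L); i = score t B A in
        card (T \<inter> A) \<ge> t i \<or> card (T - A) \<ge> n + 1 - t (Suc i))"
  define m where "m = tau1 n t B c ord tb A"
  have m_def': "m = (LEAST \<tau>. cond \<tau>)" unfolding m_def tau1_def cond_def L_def ..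
  have condI: "cond \<tau> \<longleftrightarrow> t i \<le> card (snd ` set (take \<tau> L) \<inter> A) \<or>
      n + 1 - t (Suc i) \<le> card (snd ` set (take \<tau> L) - A)" for \<tau>
    unfolding cond_def i_def Let_def by simp
  have cn: "cond n"
  proof -
    have "take n L = L" using R.len_le[of n] unfolding L_def by simp
    then show ?thesis using det_counts[OF B t_first t_last t_mono A _ R.det_n] condI
      unfolding L_def i_def by (simp add: Int_commute)
  qed
  have mn: "m \<le> n" unfolding m_def' using cn by (rule Least_le)
  have tk: "take k L = rr_run n t B c ord tb A k" if "k \<le> n" for k
    using R.take_rr[OF that] unfolding L_def .
  have v: "valid_strategy n t B OPT" using opt unfolding is_OPT_def by simp
  define S where "S = fst ` set (srun n t B OPT A n)"
  have fS: "finite S" unfolding S_def by simp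
  have Sn: "S \<subseteq> {..<n}" using srun_inv[OF v A, of n] unfolding S_def by simp
  have cS: "t i \<le> card (S \<inter> A) \<and> n + 1 - t (Suc i) \<le> card (S - A)"
    using det_counts[OF B t_first t_last t_mono A fS] srun_det[OF v A] unfolding S_def i_def by simp
  have cardS: "card S = card (S \<inter> A) + card (S - A)"
  proof -
    have "S = (S \<inter> A) \<union> (S - A)" by auto
    moreover have "(S \<inter> A) \<inter> (S - A) = {}" by auto
    ultimately show ?thesis using fS card_Un_disjoint
      by (metis finite_Diff finite_Int)
  qed
  have cm: "card (R.TT m) \<le> card S"
  proof (cases m)
    case 0 then show ?thesis by simp
  next
    case (Suc m')
    have "m' < m" using Suc by simp
    then have nc: "\<not> cond m'" unfolding m_def' using not_less_Least by blast
    have T': "snd ` set (take m' L) = R.TT m'" using tk[of m'] mn Suc by simp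
    have "card (R.TT m' \<inter> A) < t i" "card (R.TT m' - A) < n + 1 - t (Suc i)"
      using nc condI[of m'] T' by auto
    moreover have "card (R.TT m') = card (R.TT m' \<inter> A) + card (R.TT m' - A)"
    proof -
      have "R.TT m' = (R.TT m' \<inter> A) \<union> (R.TT m' - A)" by auto
      moreover have "(R.TT m' \<inter> A) \<inter> (R.TT m' - A) = {}" by auto
      ultimately show ?thesis using card_Un_disjoint
        by (metis finite_Diff finite_Int List.finite_set finite_imageI)
    qed
    moreover have "card (R.TT m) \<le> Suc (card (R.TT m'))"
    proof -
      have "R.TT m \<subseteq> insert (rr_next ord (R.rr m') (rr_choose c ord tb (R.rr m'))) (R.TT m')"
        using R.rr_cases[of m'] Suc by auto
      then have "card (R.TT m) \<le> card (insert (rr_next ord (R.rr m') (rr_choose c ord tb (R.rr m'))) (R.TT m'))"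
        by (intro card_mono) auto
      also have "\<dots> \<le> Suc (card (R.TT m'))" by (simp add: card_insert_le_m1)
      finally show ?thesis .
    qed
    ultimately show ?thesis using cS cardS by linarith
  qed
  obtain Q where Q: "Q \<subseteq> S - R.TT m" "R.MM (R.rr m) \<le> 2 * (sum c (S \<inter> R.TT m) + sum c Q)"
    using R.inv_main[OF fS Sn cm, of m] by auto
  have cnn: "\<forall>j\<in>S. 0 \<le> c j" using Sn cost_nonneg by auto
  have "sum c (S \<inter> R.TT m) + sum c Q = sum c ((S \<inter> R.TT m) \<union> Q)"
  proof -
    have "finite Q" using Q(1) fS finite_subset by blast
    moreover have "(S \<inter> R.TT m) \<inter> Q = {}" using Q(1) by auto
    ultimately show ?thesis using fS by (simp add: sum.union_disjoint)
  qed
  also have "\<dots> \<le> sum c S"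
    using Q(1) fS cnn by (intro sum_mono2) auto
  also have "\<dots> \<le> strat_cost n c t B OPT A"
    unfolding strat_cost_def S_def
    by (rule sl_ge) (use Sn cost_nonneg in \<open>auto simp: S_def\<close>)
  finally have b0: "sum c (S \<inter> R.TT m) + sum c Q \<le> strat_cost n c t B OPT A" .
  have b1: "R.MM (R.rr m) \<le> 2 * strat_cost n c t B OPT A"
    by (rule order_trans[OF Q(2)]) (use b0 in simp)
  have "(\<Sum>\<tau>\<in>{1..m}. rr_step_cost n t B c ord tb A h \<tau>) = rr_C c h (R.rr m)"
    using sum_step[where m=m and n=n and t=t and B=B and c=c and ord=ord and tb=tb and A=A and h=h] tk[OF mn] unfolding L_def by simp
  also have "\<dots> \<le> R.MM (R.rr m)" unfolding R.MM_def by (cases h) auto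
  finally show ?thesis using b1 unfolding m_def ord_def by simp
qed


end
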